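(* Let $m \geq 2$ be an integer and $n = m^2$. For $k = 0,1,\ldots,m-1$ let $u_k = e^{i 2 k \pi/m}$. For $\mathbf{t} = (t_0,t_1,\ldots,t_{m-2}) \in (\mathbb{C}\setminus\{0\})^{m-1}$ define the point $\mathbf{x}(\mathbf{t}) = (x_0,\ldots,x_{n-1}) \in \mathbb{C}^n$ by \[ x_{km+j} = u_k\, t_0 t_1 \cdots t_j \quad (j = 0,1,\ldots,m-2), \qquad x_{km+m-1} = u_k\, t_0^{-m+1} t_1^{-m+2} \cdots t_{m-3}^{-2} t_{m-2}^{-1}, \] for $k = 0,1,\ldots,m-1$ (so the exponent of $t_j$ in $x_{km+m-1}$ is $-(m-1-j)$). Let $S \subseteq \mathbb{C}^n$ be the Zariski closure of $\{\mathbf{x}(\mathbf{t}) : \mathbf{t} \in (\mathbb{C}\setminus\{0\})^{m-1}\}$, an $(m-1)$-dimensional algebraic set. Then the degree of $S$ equals $m$.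
   Context: The degree of an algebraic set $S \subseteq \mathbb{C}^n$ of dimension $d$ is the number of points in the intersection of $S$ with $d$ hyperplanes with generic (random) complex coefficients. *)

theory Defs
  imports Complex_Main
begin

text \<open>Points of C^n are represented as functions nat => complex that vanish
  outside the index range {0..<n}.\<close>

definition cpoints :: "nat \<Rightarrow> (nat \<Rightarrow> complex) set" where
  "cpoints n = {x. \<forall>i\<ge>n. x i = 0}"

inductive poly_fun :: "nat \<Rightarrow> ((nat \<Rightarrow> complex) \<Rightarrow> complex) \<Rightarrow> bool" for n where
  pf_const: "poly_fun n (\<lambda>x. c)"
| pf_var: "i < n \<Longrightarrow> poly_fun n (\<lambda>x. x i)"
| pf_add: "poly_fun n p \<Longrightarrow> poly_fun n q \<Longrightarrow> poly_fun n (\<lambda>x. p x + q x)"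
| pf_mult: "poly_fun n p \<Longrightarrow> poly_fun n q \<Longrightarrow> poly_fun n (\<lambda>x. p x * q x)"

definition zariski_closure :: "nat \<Rightarrow> (nat \<Rightarrow> complex) set \<Rightarrow> (nat \<Rightarrow> complex) set" where
  "zariski_closure n A =
     {x \<in> cpoints n. \<forall>p. poly_fun n p \<and> (\<forall>y\<in>A. p y = 0) \<longrightarrow> p x = 0}"

text \<open>Intersection of S with d affine hyperplanes of C^n. The coefficients are
  packed in a point a of C^(d*(n+1)): hyperplane l (l < d) is
  a(l*(n+1)+n) + sum_{i<n} a(l*(n+1)+i) * x i = 0.\<close>

definition hyperplane_section ::
  "nat \<Rightarrow> nat \<Rightarrow> (nat \<Rightarrow> complex) set \<Rightarrow> (nat \<Rightarrow> complex) \<Rightarrow> (nat \<Rightarrow> complex) set" where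
  "hyperplane_section n d S a =
     {x \<in> S. \<forall>l<d. a (l*(n+1)+n) + (\<Sum>i<n. a (l*(n+1)+i) * x i) = 0}"

text \<open>S (of dimension d) has degree D: for generic coefficients, i.e. for all
  coefficient vectors outside a proper Zariski-closed subset of C^(d*(n+1))
  (the zero set of a polynomial that is not identically zero), the intersection
  of S with the d hyperplanes consists of exactly D points.\<close>

definition has_degree :: "nat \<Rightarrow> nat \<Rightarrow> (nat \<Rightarrow> complex) set \<Rightarrow> nat \<Rightarrow> bool" where
  "has_degree n d S D \<longleftrightarrow>
     (\<exists>P. poly_fun (d*(n+1)) P \<and> (\<exists>a\<in>cpoints (d*(n+1)). P a \<noteq> 0) \<and>
        (\<forall>a\<in>cpoints (d*(n+1)). P a \<noteq> 0 \<longrightarrow>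
            finite (hyperplane_section n d S a) \<and> card (hyperplane_section n d S a) = D))"

definition root_u :: "nat \<Rightarrow> nat \<Rightarrow> complex" where
  "root_u m k = exp (2 * pi * \<i> * of_nat k / of_nat m)"

definition param_point :: "nat \<Rightarrow> (nat \<Rightarrow> complex) \<Rightarrow> (nat \<Rightarrow> complex)" where
  "param_point m t = (\<lambda>p. if p < m * m then
      (let k = p div m; j = p mod m in
        if j \<le> m - 2 then root_u m k * (\<Prod>i\<le>j. t i)
        else root_u m k * (\<Prod>i<m-1. inverse (t i) ^ (m - 1 - i)))
     else 0)"

end

theory Submission imports Defs "Subresultants.Subresultant_Gcd" "HOL-Computational_Algebra.Field_as_Ring" "HOL-Computational_Algebra.Fundamental_Theorem_Algebra" begin


lemma poly_fun_neg: "poly_fun N p \<Longrightarrow> poly_fun N (\<lambda>x. - p x)"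
proof -
  assume "poly_fun N p"
  hence "poly_fun N (\<lambda>x. (-1) * p x)" by (intro pf_mult pf_const)
  thus ?thesis by simp
qed

lemma poly_fun_diff: "poly_fun N p \<Longrightarrow> poly_fun N q \<Longrightarrow> poly_fun N (\<lambda>x. p x - q x)"
  using pf_add[OF _ poly_fun_neg[of N q]] by simp

lemma poly_fun_sum: "finite S \<Longrightarrow> (\<And>s. s \<in> S \<Longrightarrow> poly_fun N (f s)) \<Longrightarrow> poly_fun N (\<lambda>x. \<Sum>s\<in>S. f s x)"
proof (induction S rule: finite_induct)
  case empty then show ?case using pf_const[of N 0] by simp
next
  case (insert s S) then show ?case by (simp add: pf_add)
qed

lemma poly_fun_prod: "finite S \<Longrightarrow> (\<And>s. s \<in> S \<Longrightarrow> poly_fun N (f s)) \<Longrightarrow> poly_fun N (\<lambda>x. \<Prod>s\<in>S. f s x)"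
proof (induction S rule: finite_induct)
  case empty then show ?case using pf_const[of N 1] by simp
next
  case (insert s S) then show ?case by (simp add: pf_mult)
qed

lemma poly_fun_pow: "poly_fun N p \<Longrightarrow> poly_fun N (\<lambda>x. p x ^ k)"
  by (induction k) (auto intro: pf_mult pf_const[of N 1, simplified])

lemma poly_fun_det:
  assumes car: "\<And>a. A a \<in> carrier_mat r r"
    and ent: "\<And>i j. i < r \<Longrightarrow> j < r \<Longrightarrow> poly_fun N (\<lambda>a. A a $$ (i,j))"
  shows "poly_fun N (\<lambda>a. det (A a))"
proof -
  have "poly_fun N (\<lambda>a. \<Sum> p \<in> {p. p permutes {0 ..< r}}. signof p * (\<Prod> i = 0 ..< r. A a $$ (i, p i)))"
  proof (intro poly_fun_sum pf_mult pf_const poly_fun_prod)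
    show "finite {p. p permutes {0 ..< r}}" by (simp add: finite_permutations)
    fix p i assume "p \<in> {p. p permutes {0 ..< r}}" "i \<in> {0..<r}"
    thus "poly_fun N (\<lambda>a. A a $$ (i, p i))"
      by (intro ent) (auto simp: permutes_in_image)
  qed auto
  thus ?thesis using det_def'[OF car] by simp
qed

lemma poly_fun_adj:
  assumes car: "\<And>a. A a \<in> carrier_mat r r"
    and ent: "\<And>i j. i < r \<Longrightarrow> j < r \<Longrightarrow> poly_fun N (\<lambda>a. A a $$ (i,j))"
    and ij: "i < r" "j < r"
  shows "poly_fun N (\<lambda>a. adj_mat (A a) $$ (i,j))"
proof -
  have dims: "dim_row (A a) = r" "dim_col (A a) = r" for a using car[of a] by auto
  have "poly_fun N (\<lambda>a. (-1)^(j+i) * det (mat_delete (A a) j i))"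
  proof (intro pf_mult pf_const poly_fun_det)
    show "mat_delete (A a) j i \<in> carrier_mat (r-1) (r-1)" for a by (simp add: carrier_matI dims)
    fix i' j' assume "i' < r - 1" "j' < r - 1"
    thus "poly_fun N (\<lambda>a. mat_delete (A a) j i $$ (i', j'))"
      unfolding mat_delete_def using dims by (auto intro!: ent)
  qed
  thus ?thesis using ij by (simp add: adj_mat_def dims cofactor_def)
qed




definition pcf :: "nat \<Rightarrow> ((nat \<Rightarrow> complex) \<Rightarrow> complex poly) \<Rightarrow> bool" where
  "pcf N F \<longleftrightarrow> (\<forall>i. poly_fun N (\<lambda>a. coeff (F a) i))"

lemma pcf_const: "poly_fun N c \<Longrightarrow> pcf N (\<lambda>a. [:c a:])"
  unfolding pcf_def
proof
  fix i assume "poly_fun N c"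
  thus "poly_fun N (\<lambda>a. coeff [:c a:] i)" by (cases i) (simp_all add: pf_const)
qed

lemma pcf_lin: "poly_fun N c \<Longrightarrow> poly_fun N d \<Longrightarrow> pcf N (\<lambda>a. [:c a, d a:])"
  unfolding pcf_def
proof
  fix i assume "poly_fun N c" "poly_fun N d"
  thus "poly_fun N (\<lambda>a. coeff [:c a, d a:] i)"
    by (cases i; cases "i - 1") (simp_all add: pf_const)
qed

lemma pcf_diff: "pcf N F \<Longrightarrow> pcf N G \<Longrightarrow> pcf N (\<lambda>a. F a - G a)"
  unfolding pcf_def coeff_diff
proof
  fix i assume F: "\<forall>i. poly_fun N (\<lambda>a. coeff (F a) i)" and G: "\<forall>i. poly_fun N (\<lambda>a. coeff (G a) i)"
  show "poly_fun N (\<lambda>a. coeff (F a) i - coeff (G a) i)"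
    by (rule poly_fun_diff) (use F G in blast)+
qed

lemma pcf_mult: "pcf N F \<Longrightarrow> pcf N G \<Longrightarrow> pcf N (\<lambda>a. F a * G a)"
  unfolding pcf_def coeff_mult
proof
  fix i assume F: "\<forall>i. poly_fun N (\<lambda>a. coeff (F a) i)" and G: "\<forall>i. poly_fun N (\<lambda>a. coeff (G a) i)"
  show "poly_fun N (\<lambda>a. \<Sum>j\<le>i. coeff (F a) j * coeff (G a) (i - j))"
    by (rule poly_fun_sum) (use F G in \<open>simp_all add: pf_mult\<close>)
qed

lemma pcf_prod: "finite S \<Longrightarrow> (\<And>s. s \<in> S \<Longrightarrow> pcf N (F s)) \<Longrightarrow> pcf N (\<lambda>a. \<Prod>s\<in>S. F s a)"
proof (induction S rule: finite_induct)
  case empty then show ?case using pcf_const[OF pf_const[of N 1]] by (simp add: pCons_one)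
next
  case (insert s S) then show ?case by (simp add: pcf_mult)
qed

lemma pcf_pderiv: "pcf N F \<Longrightarrow> pcf N (\<lambda>a. pderiv (F a))"
  unfolding pcf_def coeff_pderiv
proof
  fix i assume F: "\<forall>i. poly_fun N (\<lambda>a. coeff (F a) i)"
  show "poly_fun N (\<lambda>a. of_nat (Suc i) * coeff (F a) (Suc i))"
    by (rule pf_mult[OF pf_const]) (use F in blast)
qed

lemma poly_fun_sylv:
  assumes "pcf N F" "pcf N G"
  shows "poly_fun N (\<lambda>a. det (sylvester_mat_sub p q (F a) (G a)))"
proof (rule poly_fun_det[of _ "p+q"])
  show "sylvester_mat_sub p q (F a) (G a) \<in> carrier_mat (p + q) (p + q)" for a
    by (rule sylvester_mat_sub_carrier)
  fix i j assume "i < p + q" "j < p + q"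
  show "poly_fun N (\<lambda>a. sylvester_mat_sub p q (F a) (G a) $$ (i, j))"
  proof (cases "i < q")
    case True
    have e: "(\<lambda>a. sylvester_mat_sub p q (F a) (G a) $$ (i, j)) =
      (\<lambda>a. if i \<le> j \<and> j - i \<le> p then coeff (F a) (p + i - j) else 0)"
      using True \<open>i < p+q\<close> \<open>j < p+q\<close> by (simp add: sylvester_mat_sub_index)
    show ?thesis unfolding e using assms(1) unfolding pcf_def
      by (cases "i \<le> j \<and> j - i \<le> p") (subst if_P, assumption, blast, subst if_not_P, assumption, rule pf_const)
  next
    case False
    have e: "(\<lambda>a. sylvester_mat_sub p q (F a) (G a) $$ (i, j)) =
      (\<lambda>a. if i - q \<le> j \<and> j \<le> i then coeff (G a) (i - j) else 0)"
      using False \<open>i < p+q\<close> \<open>j < p+q\<close> by (simp add: sylvester_mat_sub_index)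
    show ?thesis unfolding e using assms(2) unfolding pcf_def
      by (cases "i - q \<le> j \<and> j \<le> i") (subst if_P, assumption, blast, subst if_not_P, assumption, rule pf_const)
  qed
qed




definition bco :: "nat \<Rightarrow> (nat \<Rightarrow> complex) \<Rightarrow> nat \<Rightarrow> nat \<Rightarrow> complex" where
  "bco m a l j = (\<Sum>k<m. a (l*(m*m+1) + k*m + j) * root_u m k)"
definition cco :: "nat \<Rightarrow> (nat \<Rightarrow> complex) \<Rightarrow> nat \<Rightarrow> complex" where
  "cco m a l = a (l*(m*m+1) + m*m)"
definition Mm :: "nat \<Rightarrow> (nat \<Rightarrow> complex) \<Rightarrow> complex mat" where
  "Mm m a = mat (m-1) (m-1) (\<lambda>(l,j). bco m a l (Suc j))"
definition Dt :: "nat \<Rightarrow> (nat \<Rightarrow> complex) \<Rightarrow> complex" where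
  "Dt m a = det (Mm m a)"
definition cv :: "nat \<Rightarrow> (nat \<Rightarrow> complex) \<Rightarrow> complex vec" where
  "cv m a = vec (m-1) (\<lambda>l. cco m a l)"
definition bv :: "nat \<Rightarrow> (nat \<Rightarrow> complex) \<Rightarrow> complex vec" where
  "bv m a = vec (m-1) (\<lambda>l. bco m a l 0)"
definition alp :: "nat \<Rightarrow> (nat \<Rightarrow> complex) \<Rightarrow> complex vec" where
  "alp m a = - (adj_mat (Mm m a) *\<^sub>v cv m a)"
definition bet :: "nat \<Rightarrow> (nat \<Rightarrow> complex) \<Rightarrow> complex vec" where
  "bet m a = - (adj_mat (Mm m a) *\<^sub>v bv m a)"
definition Gp :: "nat \<Rightarrow> (nat \<Rightarrow> complex) \<Rightarrow> complex poly" where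
  "Gp m a = [:0,1:] * (\<Prod>j<m-1. [:alp m a $ j, bet m a $ j:]) - [:Dt m a ^ (m-1):]"
definition Pf :: "nat \<Rightarrow> (nat \<Rightarrow> complex) \<Rightarrow> complex" where
  "Pf m a = Dt m a * (\<Prod>j<m-1. bet m a $ j) * det (sylvester_mat_sub m (m-1) (Gp m a) (pderiv (Gp m a)))"

lemma idx_bound:
  fixes l m k j :: nat
  assumes "l < m - 1" "k < m" "j < m"
  shows "l*(m*m+1) + k*m + j < (m-1)*(m*m+1)"
proof -
  have "k*m + j < m*m"
  proof -
    have "k*m + j < k*m + m" using assms(3) by linarith
    also have "\<dots> = (k+1)*m" by simp
    also have "\<dots> \<le> m*m" using assms by (intro mult_right_mono) auto
    finally show ?thesis .
  qed
  hence "l*(m*m+1) + k*m + j < l*(m*m+1) + (m*m+1)" by simp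
  also have "\<dots> = (l+1)*(m*m+1)" by simp
  also have "\<dots> \<le> (m-1)*(m*m+1)" using assms by (intro mult_right_mono) auto
  finally show ?thesis .
qed

lemma idx_bound2:
  fixes l m :: nat
  assumes "l < m - 1"
  shows "l*(m*m+1) + m*m < (m-1)*(m*m+1)"
proof -
  have "l*(m*m+1) + m*m < (l+1)*(m*m+1)" by (simp add: algebra_simps)
  also have "\<dots> \<le> (m-1)*(m*m+1)" using assms by (intro mult_right_mono) auto
  finally show ?thesis .
qed

lemma pf_bco: "l < m - 1 \<Longrightarrow> j < m \<Longrightarrow> poly_fun ((m-1)*(m*m+1)) (\<lambda>a. bco m a l j)"
  unfolding bco_def by (intro poly_fun_sum pf_mult pf_const pf_var idx_bound) auto

lemma pf_cco: "l < m - 1 \<Longrightarrow> poly_fun ((m-1)*(m*m+1)) (\<lambda>a. cco m a l)"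
  unfolding cco_def by (intro pf_var idx_bound2)

lemma Mm_carrier: "Mm m a \<in> carrier_mat (m-1) (m-1)"
  unfolding Mm_def by simp

lemma pf_Mm: "i < m - 1 \<Longrightarrow> j < m - 1 \<Longrightarrow> poly_fun ((m-1)*(m*m+1)) (\<lambda>a. Mm m a $$ (i,j))"
  unfolding Mm_def using pf_bco[of i m "Suc j"] by simp

lemma pf_Dt: "poly_fun ((m-1)*(m*m+1)) (\<lambda>a. Dt m a)"
  unfolding Dt_def by (rule poly_fun_det[OF Mm_carrier pf_Mm])

lemma pf_adj: "i < m - 1 \<Longrightarrow> j < m - 1 \<Longrightarrow> poly_fun ((m-1)*(m*m+1)) (\<lambda>a. adj_mat (Mm m a) $$ (i,j))"
  by (rule poly_fun_adj[OF Mm_carrier pf_Mm])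

lemma adj_carrier: "adj_mat (Mm m a) \<in> carrier_mat (m-1) (m-1)"
  using adj_mat(1)[OF Mm_carrier] .

lemma mv_index: "A \<in> carrier_mat r r \<Longrightarrow> dim_vec v = r \<Longrightarrow> i < r \<Longrightarrow>
   (A *\<^sub>v v) $ i = (\<Sum>j<r. A $$ (i,j) * v $ j)"
  by (auto simp: scalar_prod_def atLeast0LessThan intro!: sum.cong)

lemma pf_alp: assumes i: "i < m - 1" shows "poly_fun ((m-1)*(m*m+1)) (\<lambda>a. alp m a $ i)"
proof -
  have "alp m a $ i = - (\<Sum>j<m-1. adj_mat (Mm m a) $$ (i,j) * cco m a j)" for a
  proof -
    have "(adj_mat (Mm m a) *\<^sub>v cv m a) $ i = (\<Sum>j<m-1. adj_mat (Mm m a) $$ (i,j) * cv m a $ j)"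
      by (rule mv_index[OF adj_carrier]) (use i in \<open>auto simp: cv_def\<close>)
    thus ?thesis unfolding alp_def using i adj_carrier[of m a] by (simp add: cv_def)
  qed
  moreover have "poly_fun ((m-1)*(m*m+1)) (\<lambda>a. - (\<Sum>j<m-1. adj_mat (Mm m a) $$ (i,j) * cco m a j))"
    by (intro poly_fun_neg poly_fun_sum pf_mult pf_adj pf_cco i) auto
  ultimately show ?thesis by simp
qed

lemma pf_bet: assumes i: "i < m - 1" shows "poly_fun ((m-1)*(m*m+1)) (\<lambda>a. bet m a $ i)"
proof -
  have "bet m a $ i = - (\<Sum>j<m-1. adj_mat (Mm m a) $$ (i,j) * bco m a j 0)" for a
  proof -
    have "(adj_mat (Mm m a) *\<^sub>v bv m a) $ i = (\<Sum>j<m-1. adj_mat (Mm m a) $$ (i,j) * bv m a $ j)"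
      by (rule mv_index[OF adj_carrier]) (use i in \<open>auto simp: bv_def\<close>)
    thus ?thesis unfolding bet_def using i adj_carrier[of m a] by (simp add: bv_def)
  qed
  moreover have "poly_fun ((m-1)*(m*m+1)) (\<lambda>a. - (\<Sum>j<m-1. adj_mat (Mm m a) $$ (i,j) * bco m a j 0))"
    by (intro poly_fun_neg poly_fun_sum pf_mult pf_adj pf_bco i) auto
  ultimately show ?thesis by simp
qed

lemma pcf_Gp: "pcf ((m-1)*(m*m+1)) (Gp m)"
proof -
  have "pcf ((m-1)*(m*m+1)) (\<lambda>a. [:0,1:] * (\<Prod>j<m-1. [:alp m a $ j, bet m a $ j:]) - [:Dt m a ^ (m-1):])"
    by (intro pcf_diff pcf_mult pcf_prod pcf_lin pcf_const pf_const pf_alp pf_bet poly_fun_pow pf_Dt) auto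
  thus ?thesis unfolding Gp_def[abs_def] by simp
qed

lemma pf_Pf: "poly_fun ((m-1)*(m*m+1)) (Pf m)"
proof -
  have "poly_fun ((m-1)*(m*m+1)) (\<lambda>a. Dt m a * (\<Prod>j<m-1. bet m a $ j) * det (sylvester_mat_sub m (m-1) (Gp m a) (pderiv (Gp m a))))"
    by (intro pf_mult pf_Dt poly_fun_prod pf_bet poly_fun_sylv pcf_Gp pcf_pderiv) auto
  thus ?thesis unfolding Pf_def[abs_def] by simp
qed




definition Tset :: "nat \<Rightarrow> (nat \<Rightarrow> complex) set" where
  "Tset m = {x \<in> cpoints (m*m). (\<forall>k<m. \<forall>j<m. x (k*m+j) = root_u m k * x j) \<and> (\<Prod>j<m. x j) = 1}"

lemma root_u_0[simp]: "root_u m 0 = 1"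
  by (simp add: root_u_def)

lemma km_bound: fixes k j m :: nat assumes "k < m" "j < m" shows "k*m + j < m*m"
proof -
  have "k*m + j < k*m + m" using assms(2) by linarith
  also have "\<dots> = (k+1)*m" by simp
  also have "\<dots> \<le> m*m" using assms by (intro mult_right_mono) auto
  finally show ?thesis .
qed

lemma km_div: fixes k j m :: nat assumes "j < m" shows "(k*m+j) div m = k" "(k*m+j) mod m = j"
  using assms by auto

lemma prod_tri: "(\<Prod>j<M. \<Prod>i\<le>j. t i) = (\<Prod>i<M. (t i :: complex) ^ (M - i))"
proof (induction M)
  case 0 then show ?case by simp
next
  case (Suc M)
  have e: "(\<Prod>i\<le>M. t i) = (\<Prod>i<M. t i) * t M"
    by (simp add: lessThan_Suc_atMost[symmetric])
  have "(\<Prod>j<Suc M. \<Prod>i\<le>j. t i) = (\<Prod>i<M. t i ^ (M - i)) * ((\<Prod>i<M. t i) * t M)"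
    by (simp only: prod.lessThan_Suc Suc.IH e)
  also have "\<dots> = (\<Prod>i<M. t i ^ (M - i) * t i) * t M" by (simp add: prod.distrib)
  also have "(\<Prod>i<M. t i ^ (M - i) * t i) = (\<Prod>i<M. t i ^ (Suc M - i))"
    by (intro prod.cong refl) (simp add: Suc_diff_le power_Suc2[symmetric] less_imp_le)
  finally show ?case by simp
qed

lemma param_in_T:
  assumes m: "m \<ge> 2" and t: "\<forall>j<m-1. t j \<noteq> 0"
  shows "param_point m t \<in> Tset m"
proof -
  define V where "V j = (if j \<le> m - 2 then (\<Prod>i\<le>j. t i) else (\<Prod>i<m-1. inverse (t i) ^ (m - 1 - i)))" for j
  have pp: "param_point m t (k*m+j) = root_u m k * V j" if "k < m" "j < m" for k j
    using km_bound[OF that] km_div[OF that(2)] unfolding param_point_def V_def by simp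
  have cp: "param_point m t \<in> cpoints (m*m)" unfolding cpoints_def param_point_def by auto
  have x0: "param_point m t j = V j" if "j < m" for j using pp[of 0 j] that m by simp
  have "(\<Prod>j<m. param_point m t j) = (\<Prod>j<m. V j)" using x0 by simp
  also have "\<dots> = (\<Prod>j<Suc (m-1). V j)" using m by simp
  also have "\<dots> = (\<Prod>j<m-1. V j) * V (m-1)" by simp
  also have "(\<Prod>j<m-1. V j) = (\<Prod>j<m-1. \<Prod>i\<le>j. t i)" unfolding V_def by (intro prod.cong) auto
  also have "\<dots> = (\<Prod>i<m-1. t i ^ (m - 1 - i))" by (rule prod_tri)
  also have "V (m-1) = (\<Prod>i<m-1. inverse (t i) ^ (m - 1 - i))" unfolding V_def using m by simp
  also have "(\<Prod>i<m-1. t i ^ (m - 1 - i)) * (\<Prod>i<m-1. inverse (t i) ^ (m - 1 - i)) = 1"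
    unfolding prod.distrib[symmetric] power_mult_distrib[symmetric] using t
    by (intro prod.neutral) auto
  finally have "(\<Prod>j<m. param_point m t j) = 1" .
  moreover have "\<forall>k<m. \<forall>j<m. param_point m t (k*m+j) = root_u m k * param_point m t j"
    using pp x0 by simp
  ultimately show ?thesis using cp unfolding Tset_def by blast
qed

lemma T_in_param:
  assumes m: "m \<ge> 2" and x: "x \<in> Tset m"
  shows "\<exists>t. x = param_point m t \<and> (\<forall>j<m-1. t j \<noteq> 0)"
proof -
  have cp: "\<And>i. i \<ge> m*m \<Longrightarrow> x i = 0" and rel: "\<And>k j. k<m \<Longrightarrow> j<m \<Longrightarrow> x (k*m+j) = root_u m k * x j"
    and pr: "(\<Prod>j<m. x j) = 1" using x unfolding Tset_def cpoints_def by auto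
  have nz: "x j \<noteq> 0" if "j < m" for j
  proof
    assume "x j = 0" hence "(\<Prod>j<m. x j) = 0" using that by (intro prod_zero) auto
    thus False using pr by simp
  qed
  define t where "t j = x j / (if j = 0 then 1 else x (j - 1))" for j
  have tel: "(\<Prod>i\<le>j. t i) = x j" if "j < m" for j
    using that
  proof (induction j)
    case 0 then show ?case by (simp add: t_def)
  next
    case (Suc j)
    hence "(\<Prod>i\<le>Suc j. t i) = x j * t (Suc j)" by simp
    also have "\<dots> = x (Suc j)" unfolding t_def using nz[of j] Suc.prems by simp
    finally show ?case .
  qed
  have tnz: "\<forall>j<m-1. t j \<noteq> 0"
    using nz unfolding t_def by (auto simp: nz)
  have last: "(\<Prod>i<m-1. inverse (t i) ^ (m - 1 - i)) = x (m-1)"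
  proof -
    have "(\<Prod>i<m-1. inverse (t i) ^ (m - 1 - i)) = inverse (\<Prod>i<m-1. t i ^ (m - 1 - i))"
      using prod_inversef[of "\<lambda>i. t i ^ (m - 1 - i)" "{..<m-1}"] by (simp add: o_def power_inverse)
    also have "(\<Prod>i<m-1. t i ^ (m - 1 - i)) = (\<Prod>j<m-1. \<Prod>i\<le>j. t i)" by (rule prod_tri[symmetric])
    also have "\<dots> = (\<Prod>j<m-1. x j)" using tel m by (intro prod.cong) auto
    also have "(\<Prod>j<m-1. x j) * x (m-1) = 1" using pr m
      by (metis Suc_diff_1 less_le_trans pos2 prod.lessThan_Suc)
    hence "inverse (\<Prod>j<m-1. x j) = x (m-1)"
      by (metis inverse_unique)
    finally show ?thesis .
  qed
  have "x = param_point m t"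
  proof
    fix p
    show "x p = param_point m t p"
    proof (cases "p < m*m")
      case False thus ?thesis using cp unfolding param_point_def by auto
    next
      case True
      define k j where "k = p div m" "j = p mod m"
      have mpos: "m > 0" using m by simp
      have kj: "k < m" "j < m" "p = k*m+j"
        using True mpos unfolding k_j_def by (auto simp: less_mult_imp_div_less)
      have "x p = root_u m k * x j" using rel kj by simp
      also have "x j = (if j \<le> m - 2 then (\<Prod>i\<le>j. t i) else (\<Prod>i<m-1. inverse (t i) ^ (m - 1 - i)))"
      proof (cases "j \<le> m - 2")
        case True thus ?thesis using tel[OF kj(2)] by simp
      next
        case False hence "j = m - 1" using kj(2) by arith
        thus ?thesis using last False by simp
      qed
      finally show ?thesis unfolding param_point_def using True k_j_def by (simp add: Let_def)
    qed
  qed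
  thus ?thesis using tnz by blast
qed

lemma image_eq_T:
  assumes m: "m \<ge> 2"
  shows "{param_point m t | t. \<forall>j<m-1. t j \<noteq> 0} = Tset m"
  using param_in_T[OF m] T_in_param[OF m] by blast

lemma closure_T:
  assumes m: "m \<ge> 2"
  shows "zariski_closure (m*m) {param_point m t | t. \<forall>j<m-1. t j \<noteq> 0} = Tset m"
  unfolding image_eq_T[OF m]
proof
  show "Tset m \<subseteq> zariski_closure (m*m) (Tset m)"
    unfolding zariski_closure_def by (auto simp: Tset_def)
next
  show "zariski_closure (m*m) (Tset m) \<subseteq> Tset m"
  proof
    fix x assume x: "x \<in> zariski_closure (m*m) (Tset m)"
    hence cp: "x \<in> cpoints (m*m)" and van: "\<And>p. poly_fun (m*m) p \<Longrightarrow> (\<forall>y\<in>Tset m. p y = 0) \<Longrightarrow> p x = 0"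
      unfolding zariski_closure_def by auto
    have "x (k*m+j) = root_u m k * x j" if "k<m" "j<m" for k j
    proof -
      have jm: "j < m*m" using km_bound[of 0 m j] that by simp
      have "poly_fun (m*m) (\<lambda>y. y (k*m+j) - root_u m k * y j)"
        by (intro poly_fun_diff pf_mult pf_const pf_var km_bound that jm)
      moreover have "\<forall>y\<in>Tset m. y (k*m+j) - root_u m k * y j = 0" using that unfolding Tset_def by auto
      ultimately show ?thesis using van by fastforce
    qed
    moreover have "(\<Prod>j<m. x j) = 1"
    proof -
      have "poly_fun (m*m) (\<lambda>y. (\<Prod>j<m. y j) - 1)"
      proof (intro poly_fun_diff poly_fun_prod pf_const pf_var)
        fix j assume "j \<in> {..<m}" thus "j < m*m" using km_bound[of 0 m j] by simp
      qed simp
      moreover have "\<forall>y\<in>Tset m. (\<Prod>j<m. y j) - 1 = 0" unfolding Tset_def by auto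
      ultimately show ?thesis using van by fastforce
    qed
    ultimately show "x \<in> Tset m" using cp unfolding Tset_def by blast
  qed
qed




lemma smult_one_mv: "w \<in> carrier_vec r \<Longrightarrow> ((D::'a::field) \<cdot>\<^sub>m 1\<^sub>m r) *\<^sub>v w = D \<cdot>\<^sub>v w"
proof -
  assume w: "w \<in> carrier_vec r"
  show ?thesis
  proof (rule eq_vecI)
    fix i assume "i < dim_vec (D \<cdot>\<^sub>v w)"
    hence i: "i < r" using w by simp
    have "(\<Sum>ia = 0..<r. D * (if ia = i then 1 else 0) * w $ ia) = (\<Sum>ia = 0..<r. if ia = i then D * w $ ia else 0)"
      by (intro sum.cong) auto
    also have "\<dots> = D * w $ i" using i by simp
    finally show "((D \<cdot>\<^sub>m 1\<^sub>m r) *\<^sub>v w) $ i = (D \<cdot>\<^sub>v w) $ i"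
      using i w by (simp add: scalar_prod_def)
  qed (use w in simp)
qed

lemma lin_solve:
  fixes M A :: "'a::field mat"
  assumes M: "M \<in> carrier_mat r r" and A: "A \<in> carrier_mat r r"
    and AM: "A * M = D \<cdot>\<^sub>m 1\<^sub>m r" and MA: "M * A = D \<cdot>\<^sub>m 1\<^sub>m r" and D: "D \<noteq> 0"
    and u: "u \<in> carrier_vec r" and w: "w \<in> carrier_vec r"
  shows "M *\<^sub>v w + u = 0\<^sub>v r \<longleftrightarrow> w = (- inverse D) \<cdot>\<^sub>v (A *\<^sub>v u)"
proof
  assume h: "M *\<^sub>v w + u = 0\<^sub>v r"
  have "A *\<^sub>v (M *\<^sub>v w + u) = A *\<^sub>v (M *\<^sub>v w) + A *\<^sub>v u"
    using A M u w by (intro mult_add_distrib_mat_vec) auto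
  also have "A *\<^sub>v (M *\<^sub>v w) = (A * M) *\<^sub>v w" using A M w by simp
  also have "\<dots> = D \<cdot>\<^sub>v w" unfolding AM by (rule smult_one_mv[OF w])
  finally have e: "D \<cdot>\<^sub>v w + A *\<^sub>v u = A *\<^sub>v (0\<^sub>v r)" using h by simp
  have dAu: "dim_vec (A *\<^sub>v u) = r" using A by simp
  show "w = (- inverse D) \<cdot>\<^sub>v (A *\<^sub>v u)"
  proof (rule eq_vecI)
    fix i assume i: "i < dim_vec ((- inverse D) \<cdot>\<^sub>v (A *\<^sub>v u))"
    hence ir: "i < r" using dAu by simp
    have "(D \<cdot>\<^sub>v w + A *\<^sub>v u) $ i = (A *\<^sub>v (0\<^sub>v r)) $ i" using e by simp
    also have "(A *\<^sub>v (0\<^sub>v r)) $ i = 0" using ir A by simp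
    also have "(D \<cdot>\<^sub>v w + A *\<^sub>v u) $ i = D * w $ i + (A *\<^sub>v u) $ i"
      using ir w dAu by simp
    finally have eq: "D * w $ i + (A *\<^sub>v u) $ i = 0" .
    have d: "D * w $ i = - (A *\<^sub>v u) $ i" using eq by (simp add: eq_neg_iff_add_eq_0)
    have "w $ i = inverse D * (D * w $ i)" using D by simp
    also have "\<dots> = - inverse D * (A *\<^sub>v u) $ i" by (simp add: d)
    also have "\<dots> = ((- inverse D) \<cdot>\<^sub>v (A *\<^sub>v u)) $ i" using ir dAu by simp
    finally show "w $ i = ((- inverse D) \<cdot>\<^sub>v (A *\<^sub>v u)) $ i" .
  qed (use A w in simp)
next
  assume h: "w = (- inverse D) \<cdot>\<^sub>v (A *\<^sub>v u)"
  have "M *\<^sub>v w = (- inverse D) \<cdot>\<^sub>v (M *\<^sub>v (A *\<^sub>v u))"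
    unfolding h using M A u by (intro mult_mat_vec) auto
  also have "M *\<^sub>v (A *\<^sub>v u) = (M * A) *\<^sub>v u" using M A u by simp
  also have "\<dots> = D \<cdot>\<^sub>v u" unfolding MA by (rule smult_one_mv[OF u])
  finally have "M *\<^sub>v w = (- inverse D) \<cdot>\<^sub>v (D \<cdot>\<^sub>v u)" .
  hence Mw: "M *\<^sub>v w = (- inverse D * D) \<cdot>\<^sub>v u" by (simp add: smult_smult_assoc)
  also have "\<dots> = (- 1) \<cdot>\<^sub>v u" using D by simp
  finally have Mw2: "M *\<^sub>v w = (- 1) \<cdot>\<^sub>v u" .
  show "M *\<^sub>v w + u = 0\<^sub>v r"
  proof (rule eq_vecI)
    fix i assume "i < dim_vec (0\<^sub>v r :: 'a vec)"
    hence i: "i < r" by simp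
    thus "(M *\<^sub>v w + u) $ i = 0\<^sub>v r $ i" unfolding Mw2 using u by simp
  qed (use M u Mw2 in simp)
qed




lemma alp_eq: "i < m - 1 \<Longrightarrow> alp m a $ i = - (\<Sum>j<m-1. adj_mat (Mm m a) $$ (i,j) * cco m a j)"
proof -
  assume i: "i < m - 1"
  have "(adj_mat (Mm m a) *\<^sub>v cv m a) $ i = (\<Sum>j<m-1. adj_mat (Mm m a) $$ (i,j) * cv m a $ j)"
    by (rule mv_index[OF adj_carrier]) (use i in \<open>auto simp: cv_def\<close>)
  thus ?thesis unfolding alp_def using i adj_carrier[of m a] by (simp add: cv_def)
qed

lemma bet_eq: "i < m - 1 \<Longrightarrow> bet m a $ i = - (\<Sum>j<m-1. adj_mat (Mm m a) $$ (i,j) * bco m a j 0)"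
proof -
  assume i: "i < m - 1"
  have "(adj_mat (Mm m a) *\<^sub>v bv m a) $ i = (\<Sum>j<m-1. adj_mat (Mm m a) $$ (i,j) * bv m a $ j)"
    by (rule mv_index[OF adj_carrier]) (use i in \<open>auto simp: bv_def\<close>)
  thus ?thesis unfolding bet_def using i adj_carrier[of m a] by (simp add: bv_def)
qed

lemma sol_iff:
  assumes D: "Dt m a \<noteq> 0" and w: "w \<in> carrier_vec (m-1)"
  shows "(\<forall>l<m-1. cco m a l + bco m a l 0 * s + (\<Sum>j<m-1. bco m a l (Suc j) * w $ j) = 0) \<longleftrightarrow>
         (\<forall>j<m-1. w $ j = (alp m a $ j + s * bet m a $ j) / Dt m a)"
proof -
  let ?r = "m - 1" let ?M = "Mm m a" let ?A = "adj_mat (Mm m a)" let ?u = "cv m a + s \<cdot>\<^sub>v bv m a"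
  have u: "?u \<in> carrier_vec ?r" by (simp add: cv_def bv_def)
  have "(\<forall>l<?r. cco m a l + bco m a l 0 * s + (\<Sum>j<?r. bco m a l (Suc j) * w $ j) = 0) \<longleftrightarrow>
        ?M *\<^sub>v w + ?u = 0\<^sub>v ?r"
  proof -
    have ent: "(?M *\<^sub>v w + ?u) $ l = cco m a l + bco m a l 0 * s + (\<Sum>j<?r. bco m a l (Suc j) * w $ j)" if "l < ?r" for l
    proof -
      have "(?M *\<^sub>v w) $ l = (\<Sum>j<?r. ?M $$ (l,j) * w $ j)"
        by (rule mv_index[OF Mm_carrier]) (use w that in auto)
      also have "\<dots> = (\<Sum>j<?r. bco m a l (Suc j) * w $ j)" using that by (intro sum.cong) (auto simp: Mm_def)
      finally show ?thesis using that w by (simp add: cv_def bv_def Mm_def mult.commute)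
    qed
    have dv: "dim_vec (?M *\<^sub>v w + ?u) = ?r" using u Mm_carrier[of m a] by (simp add: bv_def)
    have "?M *\<^sub>v w + ?u = 0\<^sub>v ?r \<longleftrightarrow> (\<forall>l<?r. (?M *\<^sub>v w + ?u) $ l = 0)"
      unfolding vec_eq_iff using dv by simp
    thus ?thesis using ent by simp
  qed
  also have "\<dots> \<longleftrightarrow> w = (- inverse (Dt m a)) \<cdot>\<^sub>v (?A *\<^sub>v ?u)"
    using lin_solve[OF Mm_carrier adj_carrier _ _ D u w] adj_mat[OF Mm_carrier[of m a]]
    unfolding Dt_def by simp
  also have "\<dots> \<longleftrightarrow> (\<forall>j<?r. w $ j = (alp m a $ j + s * bet m a $ j) / Dt m a)"
  proof -
    have "((- inverse (Dt m a)) \<cdot>\<^sub>v (?A *\<^sub>v ?u)) $ j = (alp m a $ j + s * bet m a $ j) / Dt m a" if j: "j < ?r" for j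
    proof -
      have "(?A *\<^sub>v ?u) $ j = (\<Sum>i<?r. ?A $$ (j,i) * ?u $ i)"
        by (rule mv_index[OF adj_carrier]) (use u j in \<open>auto simp: bv_def\<close>)
      also have "\<dots> = (\<Sum>i<?r. ?A $$ (j,i) * cco m a i) + s * (\<Sum>i<?r. ?A $$ (j,i) * bco m a i 0)"
        by (simp add: sum_distrib_left sum.distrib[symmetric] cv_def bv_def algebra_simps)
      also have "\<dots> = - alp m a $ j - s * bet m a $ j" using alp_eq[OF j] bet_eq[OF j] by simp
      finally have X: "(?A *\<^sub>v ?u) $ j = - alp m a $ j - s * bet m a $ j" .
      have dimA: "j < dim_vec (?A *\<^sub>v ?u)" using j adj_carrier[of m a] by simp
      show ?thesis by (simp only: index_smult_vec(1)[OF dimA] X) (simp add: divide_inverse algebra_simps)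
    qed
    thus ?thesis using w adj_carrier[of m a] by (auto simp: vec_eq_iff bv_def)
  qed
  finally show ?thesis .
qed




lemma sum_blocks:
  fixes f :: "nat \<Rightarrow> 'a::comm_monoid_add" and K m :: nat
  shows "(\<Sum>i<K*m. f i) = (\<Sum>k<K. \<Sum>j<m. f (k*m+j))"
proof (induction K)
  case 0 then show ?case by simp
next
  case (Suc K)
  have "(\<Sum>i<Suc K * m. f i) = (\<Sum>i<K*m + m. f i)" by (simp add: add.commute)
  also have "\<dots> = (\<Sum>i<K*m. f i) + (\<Sum>i=K*m..<K*m+m. f i)"
    using sum.atLeastLessThan_concat[of 0 "K*m" "K*m+m" f] by (simp add: atLeast0LessThan)
  also have "(\<Sum>i=K*m..<K*m+m. f i) = (\<Sum>j<m. f (K*m+j))"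
    using sum.shift_bounds_nat_ivl[of f 0 "K*m" m] by (simp add: atLeast0LessThan add.commute)
  finally show ?case using Suc by simp
qed

lemma hyp_sum:
  assumes x: "x \<in> Tset m"
  shows "(\<Sum>i<m*m. a (l*(m*m+1)+i) * x i) = (\<Sum>j<m. bco m a l j * x j)"
proof -
  have rel: "\<And>k j. k<m \<Longrightarrow> j<m \<Longrightarrow> x (k*m+j) = root_u m k * x j" using x unfolding Tset_def by auto
  have "(\<Sum>i<m*m. a (l*(m*m+1)+i) * x i) = (\<Sum>k<m. \<Sum>j<m. a (l*(m*m+1)+(k*m+j)) * x (k*m+j))"
    by (rule sum_blocks)
  also have "\<dots> = (\<Sum>k<m. \<Sum>j<m. a (l*(m*m+1)+k*m+j) * root_u m k * x j)"
    using rel by (intro sum.cong refl) (simp add: add.assoc)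
  also have "\<dots> = (\<Sum>j<m. \<Sum>k<m. a (l*(m*m+1)+k*m+j) * root_u m k * x j)" by (rule sum.swap)
  also have "\<dots> = (\<Sum>j<m. bco m a l j * x j)" unfolding bco_def by (simp add: sum_distrib_right)
  finally show ?thesis .
qed

definition yy :: "nat \<Rightarrow> (nat \<Rightarrow> complex) \<Rightarrow> complex \<Rightarrow> nat \<Rightarrow> complex" where
  "yy m a s j = (if j = 0 then s else (alp m a $ (j-1) + s * bet m a $ (j-1)) / Dt m a)"

definition fs :: "nat \<Rightarrow> (nat \<Rightarrow> complex) \<Rightarrow> complex \<Rightarrow> nat \<Rightarrow> complex" where
  "fs m a s = (\<lambda>p. if p < m*m then root_u m (p div m) * yy m a s (p mod m) else 0)"

lemma poly_Gp: "poly (Gp m a) s = s * (\<Prod>j<m-1. alp m a $ j + s * bet m a $ j) - Dt m a ^ (m-1)"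
  unfolding Gp_def by (simp add: poly_prod)

lemma prod_yy:
  assumes m: "m \<ge> 2" and D: "Dt m a \<noteq> 0"
  shows "(\<Prod>j<m. yy m a s j) = 1 \<longleftrightarrow> poly (Gp m a) s = 0"
proof -
  have "(\<Prod>j<m. yy m a s j) = (\<Prod>j<Suc (m-1). yy m a s j)" using m by simp
  also have "\<dots> = s * (\<Prod>j<m-1. (alp m a $ j + s * bet m a $ j) / Dt m a)"
    by (subst prod.lessThan_Suc_shift) (simp add: yy_def)
  also have "\<dots> = s * (\<Prod>j<m-1. alp m a $ j + s * bet m a $ j) / Dt m a ^ (m-1)"
    by (simp add: prod_dividef)
  finally have e: "(\<Prod>j<m. yy m a s j) = s * (\<Prod>j<m-1. alp m a $ j + s * bet m a $ j) / Dt m a ^ (m-1)" .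
  have Dn: "Dt m a ^ (m-1) \<noteq> 0" using D by simp
  show ?thesis unfolding e poly_Gp using Dn by (simp add: divide_eq_1_iff)
qed

lemma section_eq:
  assumes m: "m \<ge> 2" and D: "Dt m a \<noteq> 0"
  shows "hyperplane_section (m*m) (m-1) (Tset m) a = fs m a ` {s. poly (Gp m a) s = 0}"
proof -
  have mpos: "m > 0" using m by simp
  have hs: "hyperplane_section (m*m) (m-1) (Tset m) a =
    {x \<in> Tset m. \<forall>l<m-1. cco m a l + bco m a l 0 * x 0 + (\<Sum>j<m-1. bco m a l (Suc j) * x (Suc j)) = 0}"
  proof -
    have split: "(\<Sum>j<m. bco m a l j * x j) = bco m a l 0 * x 0 + (\<Sum>j<m-1. bco m a l (Suc j) * x (Suc j))" for l x
    proof -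
      have "(\<Sum>j<m. bco m a l j * x j) = (\<Sum>j<Suc (m-1). bco m a l j * x j)" using m by simp
      also have "\<dots> = bco m a l 0 * x 0 + (\<Sum>j<m-1. bco m a l (Suc j) * x (Suc j))"
        by (rule sum.lessThan_Suc_shift)
      finally show ?thesis .
    qed
    have key: "a (l*(m*m+1)+m*m) + (\<Sum>i<m*m. a (l*(m*m+1)+i) * x i) =
       cco m a l + bco m a l 0 * x 0 + (\<Sum>j<m-1. bco m a l (Suc j) * x (Suc j))" if "x \<in> Tset m" for l x
      unfolding hyp_sum[OF that] split cco_def by (simp only: add.assoc)
    show ?thesis unfolding hyperplane_section_def
    proof (rule Collect_cong)
      fix x
      show "(x \<in> Tset m \<and> (\<forall>l<m-1. a (l*(m*m+1)+m*m) + (\<Sum>i<m*m. a (l*(m*m+1)+i) * x i) = 0)) =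
            (x \<in> Tset m \<and> (\<forall>l<m-1. cco m a l + bco m a l 0 * x 0 + (\<Sum>j<m-1. bco m a l (Suc j) * x (Suc j)) = 0))"
      proof (cases "x \<in> Tset m")
        case True then show ?thesis by (simp only: key[OF True])
      next
        case False then show ?thesis by blast
      qed
    qed
  qed
  have solx: "(\<forall>l<m-1. cco m a l + bco m a l 0 * s + (\<Sum>j<m-1. bco m a l (Suc j) * x (Suc j)) = 0)
       \<longleftrightarrow> (\<forall>j<m-1. x (Suc j) = (alp m a $ j + s * bet m a $ j) / Dt m a)" for x s
    using sol_iff[OF D, of "vec (m-1) (\<lambda>j. x (Suc j))" s] by simp
  have fsj: "fs m a s j = yy m a s j" if "j < m" for s j
  proof -
    have "j < m*m" using km_bound[of 0 m j] that by simp
    thus ?thesis using that unfolding fs_def by simp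
  qed
  show ?thesis unfolding hs
  proof (intro equalityI subsetI)
    fix x assume "x \<in> {x \<in> Tset m. \<forall>l<m-1. cco m a l + bco m a l 0 * x 0 + (\<Sum>j<m-1. bco m a l (Suc j) * x (Suc j)) = 0}"
    hence xT: "x \<in> Tset m" and eqs: "\<forall>l<m-1. cco m a l + bco m a l 0 * x 0 + (\<Sum>j<m-1. bco m a l (Suc j) * x (Suc j)) = 0"
      by auto
    have cp: "\<And>i. i \<ge> m*m \<Longrightarrow> x i = 0" and rel: "\<And>k j. k<m \<Longrightarrow> j<m \<Longrightarrow> x (k*m+j) = root_u m k * x j"
      and pr: "(\<Prod>j<m. x j) = 1" using xT unfolding Tset_def cpoints_def by auto
    have sol: "\<forall>j<m-1. x (Suc j) = (alp m a $ j + x 0 * bet m a $ j) / Dt m a" using eqs solx by blast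
    have xy: "x j = yy m a (x 0) j" if "j < m" for j
    proof (cases j)
      case 0 then show ?thesis by (simp add: yy_def)
    next
      case (Suc j') then show ?thesis using sol that by (simp add: yy_def)
    qed
    have "(\<Prod>j<m. x j) = (\<Prod>j<m. yy m a (x 0) j)"
    proof (rule prod.cong)
      fix j assume "j \<in> {..<m}" thus "x j = yy m a (x 0) j" using xy by blast
    qed (rule refl)
    hence root: "poly (Gp m a) (x 0) = 0"
      using prod_yy[OF m D, of "x 0"] pr by simp
    have "x = fs m a (x 0)"
    proof
      fix p show "x p = fs m a (x 0) p"
      proof (cases "p < m*m")
        case False thus ?thesis using cp unfolding fs_def by auto
      next
        case True
        have kj: "p div m < m" "p mod m < m" "p = (p div m)*m + p mod m"
          using True mpos by (auto simp: less_mult_imp_div_less)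
        have "x p = root_u m (p div m) * x (p mod m)" using rel[OF kj(1,2)] kj(3) by simp
        thus ?thesis using True xy[OF kj(2)] unfolding fs_def by simp
      qed
    qed
    thus "x \<in> fs m a ` {s. poly (Gp m a) s = 0}" using root by blast
  next
    fix x assume "x \<in> fs m a ` {s. poly (Gp m a) s = 0}"
    then obtain s where x: "x = fs m a s" and root: "poly (Gp m a) s = 0" by blast
    have x0: "x 0 = s" using fsj[of 0 s] mpos x by (simp add: yy_def)
    have xj: "x j = yy m a s j" if "j < m" for j using fsj that x by simp
    have cp: "x \<in> cpoints (m*m)" unfolding x fs_def cpoints_def by auto
    have rel: "x (k*m+j) = root_u m k * x j" if "k < m" "j < m" for k j
      using km_bound[OF that] that xj[OF that(2)] unfolding x fs_def by simp
    have pr: "(\<Prod>j<m. x j) = 1" using prod_yy[OF m D, of s] root xj by simp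
    have xT: "x \<in> Tset m" using cp rel pr unfolding Tset_def by blast
    have "\<forall>j<m-1. x (Suc j) = (alp m a $ j + x 0 * bet m a $ j) / Dt m a"
      using xj x0 by (simp add: yy_def)
    hence "\<forall>l<m-1. cco m a l + bco m a l 0 * x 0 + (\<Sum>j<m-1. bco m a l (Suc j) * x (Suc j)) = 0"
      using solx by blast
    thus "x \<in> {x \<in> Tset m. \<forall>l<m-1. cco m a l + bco m a l 0 * x 0 + (\<Sum>j<m-1. bco m a l (Suc j) * x (Suc j)) = 0}"
      using xT by blast
  qed
qed

lemma fs_0: "m \<ge> 2 \<Longrightarrow> fs m a s 0 = s"
proof -
  assume m: "m \<ge> 2"
  hence "0 < m*m" by simp
  thus ?thesis unfolding fs_def yy_def by simp
qed

lemma inj_fs: "m \<ge> 2 \<Longrightarrow> inj_on (fs m a) S"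
proof (rule inj_onI)
  fix s t assume m: "m \<ge> 2" and "fs m a s = fs m a t"
  hence "fs m a s 0 = fs m a t 0" by simp
  thus "s = t" using fs_0[OF m] by simp
qed




lemma aux_pCons: "[:0,1:] * Q - [:c:] = pCons (-c) (Q::complex poly)"
  by simp

lemma Gp_pCons: "Gp m a = pCons (- (Dt m a ^ (m-1))) (\<Prod>j<m-1. [:alp m a $ j, bet m a $ j:])"
  unfolding Gp_def by (rule aux_pCons)

lemma deg_Gp:
  assumes m: "m \<ge> 2" and B: "(\<Prod>j<m-1. bet m a $ j) \<noteq> 0"
  shows "degree (Gp m a) = m"
proof -
  let ?Q = "\<Prod>j<m-1. [:alp m a $ j, bet m a $ j:]"
  have bnz: "bet m a $ j \<noteq> 0" if "j < m-1" for j using B that by auto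
  have f0: "\<forall>j\<in>{..<m-1}. [:alp m a $ j, bet m a $ j:] \<noteq> 0" using bnz by auto
  have "degree ?Q = (\<Sum>j<m-1. degree [:alp m a $ j, bet m a $ j:])"
    by (rule degree_prod_eq_sum_degree[OF f0])
  also have "\<dots> = (\<Sum>j<m-1. 1)" using bnz by (intro sum.cong) auto
  finally have dQ: "degree ?Q = m - 1" by simp
  have Qnz: "?Q \<noteq> 0" using f0 by (simp add: prod_zero_iff)
  show ?thesis unfolding Gp_pCons using degree_pCons_eq[OF Qnz] dQ m by simp
qed

lemma sylv_res:
  assumes m: "m \<ge> 2" and dG: "degree (G :: complex poly) = m"
  shows "det (sylvester_mat_sub m (m-1) G (pderiv G)) = resultant G (pderiv G)"
  unfolding resultant_def sylvester_mat_def using dG by (simp add: degree_pderiv)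

lemma res_nz_rsq:
  assumes G0: "(G :: complex poly) \<noteq> 0" and R: "resultant G (pderiv G) \<noteq> 0"
  shows "rsquarefree G"
proof -
  have dg: "degree (gcd G (pderiv G)) = 0" using R resultant_0_gcd by blast
  show ?thesis unfolding rsquarefree_roots
  proof (intro allI notI)
    fix z assume h: "poly G z = 0 \<and> poly (pderiv G) z = 0"
    hence "[:-z,1:] dvd G" "[:-z,1:] dvd pderiv G" using poly_eq_0_iff_dvd by blast+
    hence "[:-z,1:] dvd gcd G (pderiv G)" by simp
    moreover have "gcd G (pderiv G) \<noteq> 0" using G0 by simp
    ultimately have "degree [:-z,1:] \<le> degree (gcd G (pderiv G))" by (rule dvd_imp_degree_le)
    thus False using dg by simp
  qed
qed

lemma rsq_card:
  assumes G0: "(G :: complex poly) \<noteq> 0" and rs: "rsquarefree G"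
  shows "finite {s. poly G s = 0} \<and> card {s. poly G s = 0} = degree G"
proof -
  let ?R = "{s. poly G s = 0}"
  have fin: "finite ?R" by (rule poly_roots_finite[OF G0])
  have "degree G = degree (smult (lead_coeff G) (\<Prod>z\<in>?R. [:-z, 1:]))"
    using complex_poly_decompose_rsquarefree[OF rs] by simp
  also have "\<dots> = degree (\<Prod>z\<in>?R. [:-z, 1:])" using G0 by simp
  also have "\<dots> = (\<Sum>z\<in>?R. degree [:-z, 1:])" by (rule degree_prod_eq_sum_degree) auto
  also have "\<dots> = card ?R" by simp
  finally show ?thesis using fin by simp
qed

lemma count_generic:
  assumes m: "m \<ge> 2" and P: "Pf m a \<noteq> 0"
  shows "finite (hyperplane_section (m*m) (m-1) (Tset m) a) \<and> card (hyperplane_section (m*m) (m-1) (Tset m) a) = m"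
proof -
  have D: "Dt m a \<noteq> 0" and B: "(\<Prod>j<m-1. bet m a $ j) \<noteq> 0"
    and S: "det (sylvester_mat_sub m (m-1) (Gp m a) (pderiv (Gp m a))) \<noteq> 0"
    using P unfolding Pf_def by auto
  have dG: "degree (Gp m a) = m" by (rule deg_Gp[OF m B])
  have G0: "Gp m a \<noteq> 0" using dG m by auto
  have rs: "rsquarefree (Gp m a)"
    using res_nz_rsq[OF G0] S sylv_res[OF m dG] by simp
  have rc: "finite {s. poly (Gp m a) s = 0} \<and> card {s. poly (Gp m a) s = 0} = m"
    using rsq_card[OF G0 rs] dG by simp
  have c: "card (fs m a ` {s. poly (Gp m a) s = 0}) = card {s. poly (Gp m a) s = 0}"
    by (rule card_image[OF inj_fs[OF m]])
  have f: "finite (fs m a ` {s. poly (Gp m a) s = 0})" using rc by blast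
  show ?thesis unfolding section_eq[OF m D] using c f rc by presburger
qed




definition a0 :: "nat \<Rightarrow> nat \<Rightarrow> complex" where
  "a0 m p = (if p < (m-1)*(m*m+1) then
      (if p mod (m*m+1) = 0 then -1 else if p mod (m*m+1) = Suc (p div (m*m+1)) then 1 else 0) else 0)"

lemma divmod_gen:
  fixes n l i :: nat
  assumes "i < n"
  shows "(l*n + i) div n = l" "(l*n + i) mod n = i"
  using assms by auto

lemma a0_idx:
  fixes l i m :: nat
  assumes "l < m - 1" "i < m*m+1"
  shows "(l*(m*m+1) + i) div (m*m+1) = l" "(l*(m*m+1) + i) mod (m*m+1) = i"
  using divmod_gen[OF assms(2), of l] by blast+

lemma bco_a0:
  assumes m: "m \<ge> 2" and l: "l < m - 1" and j: "j < m"
  shows "bco m (a0 m) l j = (if j = 0 then -1 else if j = Suc l then 1 else 0)"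
proof -
  have t: "a0 m (l*(m*m+1) + k*m + j) * root_u m k = (if k = 0 then (if j = 0 then -1 else if j = Suc l then 1 else 0) else 0)"
    if k: "k < m" for k
  proof -
    have b: "k*m + j < m*m+1" using km_bound[OF k j] by simp
    have lt: "l*(m*m+1) + k*m + j < (m-1)*(m*m+1)" by (rule idx_bound[OF l k j])
    have dm: "(l*(m*m+1) + (k*m + j)) div (m*m+1) = l" "(l*(m*m+1) + (k*m + j)) mod (m*m+1) = k*m+j"
      by (simp_all only: a0_idx[OF l b])
    have lt': "l*(m*m+1) + (k*m+j) < (m-1)*(m*m+1)" using lt by (simp add: add.assoc)
    have av: "a0 m (l*(m*m+1) + (k*m + j)) = (if k*m+j = 0 then -1 else if k*m+j = Suc l then 1 else 0)"
      unfolding a0_def by (simp only: if_P[OF lt'] dm)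
    have idx: "l*(m*m+1) + k*m + j = l*(m*m+1) + (k*m+j)" by (simp add: add.assoc)
    show ?thesis
    proof (cases "k = 0")
      case True thus ?thesis unfolding idx av by simp
    next
      case False
      hence "k*m \<ge> m" by simp
      moreover have "Suc l < m" using l by arith
      ultimately have n1: "k*m + j \<noteq> 0" and n2: "k*m + j \<noteq> Suc l" using m by linarith+
      show ?thesis unfolding idx av if_not_P[OF n1] if_not_P[OF n2] using False by simp
    qed
  qed
  have "bco m (a0 m) l j = (\<Sum>k<m. (if k = 0 then (if j = 0 then -1 else if j = Suc l then 1 else 0) else 0))"
    unfolding bco_def using t by (intro sum.cong) auto
  also have "\<dots> = (if j = 0 then -1 else if j = Suc l then 1 else 0)" using m by simp
  finally show ?thesis .
qed

lemma cco_a0: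
  assumes m: "m \<ge> 2" and l: "l < m - 1"
  shows "cco m (a0 m) l = 0"
proof -
  have lt: "l*(m*m+1) + m*m < (m-1)*(m*m+1)" by (rule idx_bound2[OF l])
  have dm: "(l*(m*m+1) + m*m) div (m*m+1) = l" "(l*(m*m+1) + m*m) mod (m*m+1) = m*m"
    using a0_idx[OF l, of "m*m"] by simp_all
  have mm: "m \<le> m*m" by simp
  have "Suc l < m" using l by arith
  hence "m*m \<noteq> 0" "m*m \<noteq> Suc l" using mm by linarith+
  thus ?thesis unfolding cco_def a0_def using lt dm by simp
qed

lemma Mm_a0: assumes m: "m \<ge> 2" shows "Mm m (a0 m) = 1\<^sub>m (m-1)"
  by (rule eq_matI) (auto simp: Mm_def bco_a0[OF m])

lemma Dt_a0: "m \<ge> 2 \<Longrightarrow> Dt m (a0 m) = 1"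
  unfolding Dt_def by (simp add: Mm_a0)

lemma adj_a0:
  assumes m: "m \<ge> 2" and i: "i < m-1" and j: "j < m-1"
  shows "adj_mat (Mm m (a0 m)) $$ (i,j) = (if i = j then 1 else 0)"
proof -
  have c: "adj_mat (Mm m (a0 m)) \<in> carrier_mat (m-1) (m-1)" by (rule adj_carrier)
  have "Mm m (a0 m) * adj_mat (Mm m (a0 m)) = Dt m (a0 m) \<cdot>\<^sub>m 1\<^sub>m (m-1)"
    using adj_mat(2)[OF Mm_carrier] unfolding Dt_def by blast
  moreover have "(1::complex) \<cdot>\<^sub>m 1\<^sub>m (m-1) = 1\<^sub>m (m-1)" by (rule eq_matI) auto
  ultimately have "adj_mat (Mm m (a0 m)) = 1\<^sub>m (m-1)"
    using c unfolding Mm_a0[OF m] Dt_a0[OF m] by simp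
  thus ?thesis using i j by simp
qed

lemma alp_a0: "m \<ge> 2 \<Longrightarrow> i < m-1 \<Longrightarrow> alp m (a0 m) $ i = 0"
  by (simp add: alp_eq cco_a0)

lemma bet_a0:
  assumes m: "m \<ge> 2" and i: "i < m-1"
  shows "bet m (a0 m) $ i = 1"
proof -
  have "bet m (a0 m) $ i = - (\<Sum>j<m-1. adj_mat (Mm m (a0 m)) $$ (i,j) * bco m (a0 m) j 0)"
    by (rule bet_eq[OF i])
  also have "\<dots> = - (\<Sum>j<m-1. if j = i then -1 else 0)"
    by (intro arg_cong[where f=uminus] sum.cong refl) (auto simp: adj_a0[OF m i] bco_a0[OF m])
  also have "\<dots> = 1" using i by simp
  finally show ?thesis .
qed

lemma Gp_a0:
  assumes m: "m \<ge> 2"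
  shows "Gp m (a0 m) = [:0,1:] ^ m - 1"
proof -
  have "(\<Prod>j<m-1. [:alp m (a0 m) $ j, bet m (a0 m) $ j:]) = (\<Prod>j<m-1. [:0,1:])"
    using alp_a0[OF m] bet_a0[OF m] by (intro prod.cong) auto
  hence "Gp m (a0 m) = [:0,1:] * [:0,1:] ^ (m-1) - 1"
    unfolding Gp_def using Dt_a0[OF m] by (simp add: pCons_one)
  also have "[:0,1:] * [:0,1:] ^ (m-1) = ([:0,1:] :: complex poly) ^ m"
    using m by (metis Suc_diff_1 less_le_trans pos2 power_Suc)
  finally show ?thesis .
qed

lemma Pf_a0:
  assumes m: "m \<ge> 2"
  shows "Pf m (a0 m) \<noteq> 0"
proof -
  let ?G = "Gp m (a0 m)"
  have B: "(\<Prod>j<m-1. bet m (a0 m) $ j) = 1" using bet_a0[OF m] by simp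
  have dG: "degree ?G = m" by (rule deg_Gp[OF m]) (subst B, simp)
  have pG: "poly ?G z = z ^ m - 1" for z unfolding Gp_a0[OF m] by (simp add: poly_power)
  have dG': "pderiv ?G = smult (of_nat m) ([:0,1:] ^ (m-1))"
  proof -
    let ?X = "[:0,1:] :: complex poly"
    have e: "?X ^ m = ?X ^ Suc (m-1)" using m by simp
    have "pderiv (?X ^ Suc (m-1)) = smult (of_nat (Suc (m-1))) (?X ^ (m-1)) * pderiv ?X"
      by (rule pderiv_power_Suc)
    also have "pderiv ?X = 1" by (simp add: pderiv_pCons)
    also have "of_nat (Suc (m-1)) = (of_nat m :: complex)" using m by simp
    finally have "pderiv (?X ^ Suc (m-1)) = smult (of_nat m) (?X ^ (m-1))" by simp
    thus ?thesis unfolding Gp_a0[OF m] e by (simp add: pderiv_diff)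
  qed
  have pG': "poly (pderiv ?G) z = of_nat m * z ^ (m-1)" for z unfolding dG' by (simp add: poly_power)
  have "degree (gcd ?G (pderiv ?G)) = 0"
  proof (rule ccontr)
    assume "degree (gcd ?G (pderiv ?G)) \<noteq> 0"
    hence "\<not> constant (poly (gcd ?G (pderiv ?G)))" using constant_degree[of "gcd ?G (pderiv ?G)"] by simp
    then obtain z where z: "poly (gcd ?G (pderiv ?G)) z = 0" using fundamental_theorem_of_algebra by blast
    have "poly ?G z = 0" using z poly_eq_0_iff_dvd by (metis dvd_trans gcd_dvd1)
    moreover have "poly (pderiv ?G) z = 0" using z poly_eq_0_iff_dvd by (metis dvd_trans gcd_dvd2)
    hence "z = 0" using m unfolding pG' by simp
    ultimately show False using m unfolding pG by (simp add: power_0_left)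
  qed
  hence "resultant ?G (pderiv ?G) \<noteq> 0" using resultant_0_gcd by blast
  hence "det (sylvester_mat_sub m (m-1) ?G (pderiv ?G)) \<noteq> 0" using sylv_res[OF m dG] by simp
  thus ?thesis unfolding Pf_def using Dt_a0[OF m] B by simp
qed

lemma a0_cp: "a0 m \<in> cpoints ((m-1)*(m*m+1))"
  unfolding cpoints_def a0_def by auto

theorem proposition3:
  fixes m :: nat
  assumes "m \<ge> 2"
  shows "has_degree (m*m) (m-1)
           (zariski_closure (m*m)
              {param_point m t | t. \<forall>j<m-1. t j \<noteq> 0})
           m"
  unfolding has_degree_def closure_T[OF assms]
  using pf_Pf[of m] Pf_a0[OF assms] a0_cp[of m] count_generic[OF assms] by blast


end
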